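(* Under the standing assumptions below, $P(t)=Q(t)$ is the unique $1$-periodic smooth family of projections $P(t)$ onto co-dimension-one subspaces (rank $n-1$) such that $X(t)P(0)=P(t)X(t)$ for all $t$ and $\Gamma(t)$ restricts to a bijection of $\operatorname{Im}P(t)$ onto itself for every $t$.
   Context: Let $n\ge 1$, let $f:\mathbb{R}^n\to\mathbb{R}^n$ be smooth, let $T>0$, and let $\gamma:\mathbb{R}\to\mathbb{R}^n$ be a $1$-periodic solution of $\dot x=Tf(x)$ with $f(\gamma(0))\neq 0$. Let $X(t)$ be the $n\times n$ matrix solution of $\dot X=T\,\mathrm{D}f(\gamma(t))X$, $X(0)=I_n$. Let $\Gamma(t):=X(t)(X(1)-I_n)X^{-1}(t)$. Hyperbolicity assumption: there is a vector $w\in\mathbb{R}^n$ such that $Q(t):=X(t)\big(I_n-f(\gamma(0))w^\mathsf{T}\big)X^{-1}(t)$ is a projection for every $t$, the family is $1$-periodic, and $\Gamma(t)$ restricts to a bijection of $\operatorname{Im}Q(t)$ onto itself. *)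

theory Defs
  imports "HOL-Analysis.Analysis"
begin

definition smooth_map :: "('a::real_normed_vector \<Rightarrow> 'b::real_normed_vector) \<Rightarrow> bool" where
  "smooth_map g \<longleftrightarrow> (\<exists>D :: nat \<Rightarrow> 'a \<Rightarrow> 'a list \<Rightarrow> 'b.
      (\<forall>x. D 0 x [] = g x) \<and>
      (\<forall>k vs x. length vs = k \<longrightarrow>
          ((\<lambda>y. D k y vs) has_derivative (\<lambda>h. D (Suc k) x (h # vs))) (at x)))"

definition outer :: "real^'n \<Rightarrow> real^'n \<Rightarrow> real^'n^'n" where
  "outer u w = (\<chi> i j. u $ i * w $ j)"

definition mat_image :: "real^'n^'n \<Rightarrow> (real^'n) set" where
  "mat_image A = range (\<lambda>v. A *v v)"

definition Gamma_mat :: "(real \<Rightarrow> real^'n^'n) \<Rightarrow> real \<Rightarrow> real^'n^'n" where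
  "Gamma_mat X t = X t ** (X 1 - mat 1) ** matrix_inv (X t)"

definition Q_mat :: "(real \<Rightarrow> real^'n^'n) \<Rightarrow> real^'n \<Rightarrow> real^'n \<Rightarrow> real \<Rightarrow> real^'n^'n" where
  "Q_mat X u w t = X t ** (mat 1 - outer u w) ** matrix_inv (X t)"

end

theory Submission
  imports Defs
begin

fun Ck :: "nat \<Rightarrow> (real \<Rightarrow> 'b::real_normed_vector) \<Rightarrow> bool" where
  "Ck 0 g = (\<forall>t. g differentiable at t)"
| "Ck (Suc k) g = ((\<forall>t. g differentiable at t) \<and> Ck k (\<lambda>t. vector_derivative g (at t)))"

lemma Ck_diff: "Ck k g \<Longrightarrow> g differentiable at t"
  by (cases k) auto

lemma Ck_vd: "Ck k g \<Longrightarrow> (g has_vector_derivative vector_derivative g (at t)) (at t)"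
  using Ck_diff vector_derivative_works by blast

lemma Ck_mono: "Ck (Suc k) g \<Longrightarrow> Ck k g"
proof (induction k arbitrary: g)
  case 0 then show ?case by simp
next
  case (Suc k) then show ?case by simp
qed

lemma Ck_deriv:
  assumes "\<And>t. (g has_vector_derivative g' t) (at t)" "Ck k g'"
  shows "Ck (Suc k) g"
proof -
  have "(\<lambda>t. vector_derivative g (at t)) = g'"
    using assms(1) vector_derivative_at by blast
  moreover have "\<forall>t. g differentiable at t" using assms(1) differentiableI_vector by blast
  ultimately show ?thesis using assms(2) by simp
qed

lemma Ck_const: "Ck k (\<lambda>t. c)"
proof (induction k arbitrary: c)
  case 0 then show ?case by simp
next
  case (Suc k)
  have "(\<lambda>t. vector_derivative (\<lambda>t. c) (at t)) = (\<lambda>t. 0)"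
    by (rule ext, rule vector_derivative_at, simp)
  then show ?case using Suc by simp
qed

lemma Ck_add: "Ck k g \<Longrightarrow> Ck k h \<Longrightarrow> Ck k (\<lambda>t. g t + h t)"
proof (induction k arbitrary: g h)
  case 0 then show ?case by simp
next
  case (Suc k)
  have d: "((\<lambda>t. g t + h t) has_vector_derivative vector_derivative g (at t) + vector_derivative h (at t)) (at t)" for t
    using Suc.prems Ck_vd by (intro has_vector_derivative_add) blast+
  show ?case
    by (rule Ck_deriv[OF d], rule Suc.IH) (use Suc.prems in auto)
qed

lemma Ck_linear:
  fixes L :: "'a::real_normed_vector \<Rightarrow> 'b::real_normed_vector"
  shows "bounded_linear L \<Longrightarrow> Ck k g \<Longrightarrow> Ck k (\<lambda>t. L (g t))"
proof (induction k arbitrary: g)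
  case 0
  have "((\<lambda>t. L (g t)) has_vector_derivative L (vector_derivative g (at t))) (at t)" for t
    using 0 Ck_vd bounded_linear.has_vector_derivative by blast
  then show ?case by (auto intro: differentiableI_vector)
next
  case (Suc k)
  have d: "((\<lambda>t. L (g t)) has_vector_derivative L (vector_derivative g (at t))) (at t)" for t
    using Suc.prems Ck_vd bounded_linear.has_vector_derivative by blast
  show ?case
    by (rule Ck_deriv[OF d], rule Suc.IH) (use Suc.prems in auto)
qed

lemma Ck_bilinear:
  fixes prod :: "'a::real_normed_vector \<Rightarrow> 'b::real_normed_vector \<Rightarrow> 'c::real_normed_vector"
  shows "bounded_bilinear prod \<Longrightarrow> Ck k g \<Longrightarrow> Ck k h \<Longrightarrow> Ck k (\<lambda>t. prod (g t) (h t))"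
proof (induction k arbitrary: g h)
  case 0
  have "((\<lambda>t. prod (g t) (h t)) has_vector_derivative
        prod (g t) (vector_derivative h (at t)) + prod (vector_derivative g (at t)) (h t)) (at t)" for t
    by (rule bounded_bilinear.has_vector_derivative[OF 0(1) Ck_vd[OF 0(2)] Ck_vd[OF 0(3)]])
  then show ?case by (auto intro: differentiableI_vector)
next
  case (Suc k)
  have d: "((\<lambda>t. prod (g t) (h t)) has_vector_derivative
        prod (g t) (vector_derivative h (at t)) + prod (vector_derivative g (at t)) (h t)) (at t)" for t
    by (rule bounded_bilinear.has_vector_derivative[OF Suc.prems(1) Ck_vd[OF Suc.prems(2)] Ck_vd[OF Suc.prems(3)]])
  show ?case
    by (rule Ck_deriv[OF d], rule Ck_add; rule Suc.IH) (use Suc.prems Ck_mono in auto)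
qed

lemma Ck_sum: "finite S \<Longrightarrow> (\<And>i. i \<in> S \<Longrightarrow> Ck k (g i)) \<Longrightarrow> Ck k (\<lambda>t. \<Sum>i\<in>S. g i t)"
proof (induction S rule: finite_induct)
  case empty then show ?case using Ck_const[of k 0] by simp
next
  case (insert x F) then show ?case by (simp add: Ck_add)
qed

lemma Cinf_smooth:
  fixes g :: "real \<Rightarrow> 'b::real_normed_vector"
  assumes "\<And>k. Ck k g"
  shows "smooth_map g"
proof -
  define nd where "nd j = ((\<lambda>h t. vector_derivative h (at t)) ^^ j) g" for j
  have nd: "Ck k (nd j)" for j k
  proof (induction j arbitrary: k)
    case 0 then show ?case using assms by (simp add: nd_def)
  next
    case (Suc j)
    have "Ck (Suc k) (nd j)" by (rule Suc.IH)
    then show ?case by (simp add: nd_def)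
  qed
  have ndS: "(nd k has_vector_derivative nd (Suc k) x) (at x)" for k x
    using Ck_vd[OF nd[of 0 k]] by (simp add: nd_def)
  define D where "D k y vs = prod_list vs *\<^sub>R nd k y" for k y and vs :: "real list"
  have "\<forall>x. D 0 x [] = g x" by (simp add: D_def nd_def)
  moreover have "((\<lambda>y. D k y vs) has_derivative (\<lambda>h. D (Suc k) x (h # vs))) (at x)" for k vs x
  proof -
    have "((\<lambda>y. prod_list vs *\<^sub>R nd k y) has_vector_derivative prod_list vs *\<^sub>R nd (Suc k) x) (at x)"
      using bounded_linear.has_vector_derivative[OF bounded_linear_scaleR_right ndS] .
    then show ?thesis by (simp add: D_def has_vector_derivative_def mult.commute)
  qed
  ultimately show ?thesis unfolding smooth_map_def by blast
qed

lemma linear_expand: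
  fixes L :: "'a::euclidean_space \<Rightarrow> 'b::real_vector"
  assumes "linear L"
  shows "L v = (\<Sum>i\<in>Basis. (v \<bullet> i) *\<^sub>R L i)"
proof -
  have "L v = L (\<Sum>i\<in>Basis. (v \<bullet> i) *\<^sub>R i)" by (simp add: euclidean_representation)
  also have "\<dots> = (\<Sum>i\<in>Basis. (v \<bullet> i) *\<^sub>R L i)"
    using assms by (simp add: linear_sum linear_scale)
  finally show ?thesis .
qed

lemma Ck_chain:
  fixes D :: "nat \<Rightarrow> 'a::euclidean_space \<Rightarrow> 'a list \<Rightarrow> 'b::real_normed_vector" and \<gamma> :: "real \<Rightarrow> 'a"
  assumes DD: "\<And>k vs x. length vs = k \<Longrightarrow> ((\<lambda>y. D k y vs) has_derivative (\<lambda>h. D (Suc k) x (h # vs))) (at x)"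
  shows "Ck k \<gamma> \<Longrightarrow> length vs = m \<Longrightarrow> Ck k (\<lambda>t. D m (\<gamma> t) vs)"
proof (induction k arbitrary: m vs)
  have hvd: "((\<lambda>t. D m (\<gamma> t) vs) has_vector_derivative
      (\<Sum>i\<in>Basis. (vector_derivative \<gamma> (at t) \<bullet> i) *\<^sub>R D (Suc m) (\<gamma> t) (i # vs))) (at t)"
    if "Ck k \<gamma>" "length vs = m" for k m vs t
  proof -
    let ?v = "vector_derivative \<gamma> (at t)"
    have g: "(\<gamma> has_derivative (\<lambda>h. h *\<^sub>R ?v)) (at t)"
      using Ck_vd[OF that(1)] by (simp add: has_vector_derivative_def)
    have d: "((\<lambda>y. D m y vs) has_derivative (\<lambda>h. D (Suc m) (\<gamma> t) (h # vs))) (at (\<gamma> t))"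
      using DD that(2) by blast
    have lin: "linear (\<lambda>h. D (Suc m) (\<gamma> t) (h # vs))"
      using d has_derivative_linear by blast
    have c: "((\<lambda>t. D m (\<gamma> t) vs) has_derivative (\<lambda>h. D (Suc m) (\<gamma> t) ((h *\<^sub>R ?v) # vs))) (at t)"
      using diff_chain_at[OF g d] by (simp add: o_def)
    have "(\<lambda>h. D (Suc m) (\<gamma> t) ((h *\<^sub>R ?v) # vs)) =
          (\<lambda>h. h *\<^sub>R (\<Sum>i\<in>Basis. (?v \<bullet> i) *\<^sub>R D (Suc m) (\<gamma> t) (i # vs)))"
    proof
      fix h
      have "D (Suc m) (\<gamma> t) ((h *\<^sub>R ?v) # vs) = h *\<^sub>R D (Suc m) (\<gamma> t) (?v # vs)"
        using linear_scale[OF lin, of h ?v] by (simp only:)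
      also have "D (Suc m) (\<gamma> t) (?v # vs) = (\<Sum>i\<in>Basis. (?v \<bullet> i) *\<^sub>R D (Suc m) (\<gamma> t) (i # vs))"
        using linear_expand[OF lin, of ?v] by (simp only:)
      finally show "D (Suc m) (\<gamma> t) ((h *\<^sub>R ?v) # vs) =
          h *\<^sub>R (\<Sum>i\<in>Basis. (?v \<bullet> i) *\<^sub>R D (Suc m) (\<gamma> t) (i # vs))" .
    qed
    with c show ?thesis by (simp add: has_vector_derivative_def)
  qed
  {
    case 0
    show ?case using hvd[OF 0] by (auto intro: differentiableI_vector)
  next
    case (Suc k)
    show ?case
    proof (rule Ck_deriv[OF hvd[OF Suc.prems]], rule Ck_sum, simp)
      fix i :: 'a assume "i \<in> Basis"
      have c1: "Ck k (\<lambda>t. vector_derivative \<gamma> (at t) \<bullet> i)"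
        using Suc.prems(1) by (intro Ck_linear[OF bounded_linear_inner_left]) simp
      have c2: "Ck k (\<lambda>t. D (Suc m) (\<gamma> t) (i # vs))"
        using Suc.IH[OF Ck_mono[OF Suc.prems(1)], of "i # vs"] Suc.prems(2) by simp
      show "Ck k (\<lambda>t. (vector_derivative \<gamma> (at t) \<bullet> i) *\<^sub>R D (Suc m) (\<gamma> t) (i # vs))"
        by (rule Ck_bilinear[OF bounded_bilinear_scaleR c1 c2])
    qed
  }
qed

lemma bb_mm: "bounded_bilinear (\<lambda>(A::real^'n^'n) (B::real^'n^'n). A ** B)"
proof -
  have "bilinear (\<lambda>(A::real^'n^'n) (B::real^'n^'n). A ** B)"
    unfolding bilinear_def
    by (auto simp: linear_iff vec_eq_iff matrix_matrix_mult_def sum.distrib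
        scaleR_sum_right sum_distrib_left field_simps)
  then show ?thesis using bilinear_conv_bounded_bilinear by blast
qed

lemma bb_mv: "bounded_bilinear (\<lambda>(A::real^'n^'n) (v::real^'n). A *v v)"
proof -
  have "bilinear (\<lambda>(A::real^'n^'n) (v::real^'n). A *v v)"
    unfolding bilinear_def
    by (auto simp: linear_iff vec_eq_iff matrix_vector_mult_def sum.distrib
        scaleR_sum_right sum_distrib_left field_simps)
  then show ?thesis using bilinear_conv_bounded_bilinear by blast
qed

lemma gronwall_fwd:
  fixes z :: "real \<Rightarrow> real^'n" and B :: "real \<Rightarrow> real^'n^'n"
  assumes dz: "\<And>s. (z has_vector_derivative (B s *v z s)) (at s)"
    and cB: "continuous_on UNIV B" and z0: "z t0 = 0" and le: "t0 \<le> t"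
  shows "z t = 0"
proof -
  obtain Kb where Kb: "\<And>M v. norm ((M::real^'n^'n) *v (v::real^'n)) \<le> norm M * norm v * Kb" and "Kb > 0"
    using bounded_bilinear.pos_bounded[OF bb_mv] by blast
  have "compact (B ` {t0..t})"
    by (rule compact_continuous_image[OF continuous_on_subset[OF cB] compact_Icc]) simp
  then obtain M where M: "\<And>s. s \<in> {t0..t} \<Longrightarrow> norm (B s) \<le> M" and "M > 0"
    using compact_imp_bounded bounded_pos by (metis imageI)
  define c where "c = 2 * M * Kb"
  define g where "g s = z s \<bullet> z s" for s
  define h where "h s = exp (- c * s) * g s" for s
  have dg: "(g has_real_derivative 2 * (z s \<bullet> (B s *v z s))) (at s)" for s
  proof -
    have "(g has_vector_derivative (z s \<bullet> (B s *v z s) + (B s *v z s) \<bullet> z s)) (at s)"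
      unfolding g_def by (rule bounded_bilinear.has_vector_derivative[OF bounded_bilinear_inner dz dz])
    then show ?thesis
      by (simp add: has_real_derivative_iff_has_vector_derivative inner_commute)
  qed
  have gle: "2 * (z s \<bullet> (B s *v z s)) \<le> c * g s" if "s \<in> {t0..t}" for s
  proof -
    have "z s \<bullet> (B s *v z s) \<le> norm (z s) * norm (B s *v z s)"
      by (metis Cauchy_Schwarz_ineq2 abs_le_D1)
    also have "\<dots> \<le> norm (z s) * (norm (B s) * norm (z s) * Kb)"
      by (rule mult_left_mono[OF Kb]) simp
    also have "\<dots> \<le> norm (z s) * (M * norm (z s) * Kb)"
      using M[OF that] \<open>Kb > 0\<close>
      by (intro mult_left_mono mult_right_mono) auto
    also have "\<dots> = M * Kb * g s"
      by (simp add: g_def power2_norm_eq_inner[symmetric] power2_eq_square)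
    finally show ?thesis by (simp add: c_def)
  qed
  have dh: "(h has_real_derivative exp (- c * s) * (2 * (z s \<bullet> (B s *v z s))) + (- c * exp (- c * s)) * g s) (at s)" for s
    unfolding h_def
    by (rule DERIV_mult'[OF _ dg] | auto intro!: derivative_eq_intros)+
  have "h t \<le> h t0"
  proof (rule DERIV_nonpos_imp_nonincreasing[OF le])
    fix s assume "t0 \<le> s" "s \<le> t"
    then have "2 * (z s \<bullet> (B s *v z s)) \<le> c * g s" using gle by auto
    then have "exp (- c * s) * (2 * (z s \<bullet> (B s *v z s))) + (- c * exp (- c * s)) * g s \<le> 0"
      by (simp add: algebra_simps)
    then show "\<exists>y. DERIV h s :> y \<and> y \<le> 0" using dh by blast
  qed
  moreover have "h t0 = 0" by (simp add: h_def g_def z0)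
  moreover have "h t \<ge> 0" by (simp add: h_def g_def)
  ultimately have "g t = 0" by (simp add: h_def)
  then show ?thesis by (simp add: g_def)
qed

lemma gronwall:
  fixes z :: "real \<Rightarrow> real^'n" and B :: "real \<Rightarrow> real^'n^'n"
  assumes dz: "\<And>s. (z has_vector_derivative (B s *v z s)) (at s)"
    and cB: "continuous_on UNIV B" and z0: "z t0 = 0"
  shows "z t = 0"
proof (cases "t0 \<le> t")
  case True then show ?thesis using gronwall_fwd[OF dz cB z0] by blast
next
  case False
  define z' where "z' = (\<lambda>s. z (- s))"
  define B' where "B' s = - B (- s)" for s
  have "(z' has_vector_derivative (B' s *v z' s)) (at s)" for s
  proof -
    have "((z \<circ> uminus) has_vector_derivative ((-1) *\<^sub>R (B (- s) *v z (- s)))) (at s)"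
      by (rule vector_diff_chain_at) (auto intro!: derivative_eq_intros dz)
    then show ?thesis
      by (simp add: z'_def B'_def o_def bounded_bilinear.minus_left[OF bb_mv])
  qed
  moreover have "continuous_on UNIV B'"
    unfolding B'_def by (intro continuous_intros continuous_on_compose2[OF cB]) auto
  moreover have "z' (- t0) = 0" by (simp add: z'_def z0)
  ultimately have "z' (- t) = 0" using False by (intro gronwall_fwd) auto
  then show ?thesis by (simp add: z'_def)
qed

lemma vd_quot_iff:
  fixes f :: "real \<Rightarrow> 'b::real_normed_vector"
  shows "(f has_vector_derivative D) (at t) \<longleftrightarrow> ((\<lambda>s. (f s - f t) /\<^sub>R (s - t)) \<longlongrightarrow> D) (at t)"
proof -
  have eq: "norm (((f y - f t) - (y - t) *\<^sub>R D) /\<^sub>R norm (y - t)) = norm ((f y - f t) /\<^sub>R (y - t) - D)"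
    if "y \<noteq> t" for y
  proof -
    have "(y - t) *\<^sub>R ((f y - f t) /\<^sub>R (y - t)) = f y - f t" using that by simp
    then have "(f y - f t) - (y - t) *\<^sub>R D = (y - t) *\<^sub>R ((f y - f t) /\<^sub>R (y - t) - D)"
      by (simp add: scaleR_right_diff_distrib)
    then show ?thesis using that by (simp add: abs_mult)
  qed
  have "(f has_vector_derivative D) (at t) \<longleftrightarrow>
      ((\<lambda>y. ((f y - f t) - (y - t) *\<^sub>R D) /\<^sub>R norm (y - t)) \<longlongrightarrow> 0) (at t)"
    unfolding has_vector_derivative_def using has_derivative_at_within[of f "\<lambda>h. h *\<^sub>R D" t UNIV]
    by (simp add: bounded_linear_scaleR_left)
  also have "\<dots> \<longleftrightarrow> ((\<lambda>y. norm (((f y - f t) - (y - t) *\<^sub>R D) /\<^sub>R norm (y - t))) \<longlongrightarrow> 0) (at t)"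
    by (rule tendsto_norm_zero_iff[symmetric])
  also have "\<dots> \<longleftrightarrow> ((\<lambda>y. norm ((f y - f t) /\<^sub>R (y - t) - D)) \<longlongrightarrow> 0) (at t)"
  proof (rule tendsto_cong)
    show "\<forall>\<^sub>F y in at t. norm (((f y - f t) - (y - t) *\<^sub>R D) /\<^sub>R norm (y - t)) = norm ((f y - f t) /\<^sub>R (y - t) - D)"
      unfolding eventually_at_filter by (rule always_eventually) (blast intro: eq)
  qed
  also have "\<dots> \<longleftrightarrow> ((\<lambda>y. (f y - f t) /\<^sub>R (y - t) - D) \<longlongrightarrow> 0) (at t)"
    by (rule tendsto_norm_zero_iff)
  also have "\<dots> \<longleftrightarrow> ((\<lambda>s. (f s - f t) /\<^sub>R (s - t)) \<longlongrightarrow> D) (at t)"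
    by (rule LIM_zero_iff)
  finally show ?thesis .
qed

lemma minv:
  fixes A :: "real^'n^'n"
  assumes "invertible A"
  shows "A ** matrix_inv A = mat 1" "matrix_inv A ** A = mat 1"
  using assms unfolding invertible_def matrix_inv_def
  by (metis (mono_tags, lifting) someI_ex)+

lemma inv_deriv:
  fixes X :: "real \<Rightarrow> real^'n^'n"
  assumes dX: "(X has_vector_derivative X') (at t)" and inv: "\<And>s. invertible (X s)"
  shows "((\<lambda>s. matrix_inv (X s)) has_vector_derivative - (matrix_inv (X t) ** X' ** matrix_inv (X t))) (at t)"
proof -
  define Y where "Y s = matrix_inv (X s)" for s
  have id: "Y s - Y t = - (Y s ** (X s - X t) ** Y t)" for s
  proof -
    have "Y s ** (X s - X t) ** Y t = (Y s ** X s) ** Y t - Y s ** (X t ** Y t)"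
      by (simp add: bounded_bilinear.diff_left[OF bb_mm] bounded_bilinear.diff_right[OF bb_mm] matrix_mul_assoc)
    also have "\<dots> = Y t - Y s" using minv[OF inv[of s]] minv[OF inv[of t]] by (simp add: Y_def)
    finally show ?thesis by simp
  qed
  obtain K where K: "\<And>(A::real^'n^'n) (B::real^'n^'n). norm (A ** B) \<le> norm A * norm B * K" and "K > 0"
    using bounded_bilinear.pos_bounded[OF bb_mm] by blast
  have Xc: "(X \<longlongrightarrow> X t) (at t)"
    using has_vector_derivative_continuous[OF dX] by (simp add: isCont_def)
  define c where "c = norm (Y t) * K * K + 1"
  have "c > 0" using \<open>K > 0\<close> unfolding c_def by (intro add_nonneg_pos mult_nonneg_nonneg) auto
  have "\<forall>\<^sub>F s in at t. norm (X s - X t) < 1 / (2 * c)"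
    using Xc \<open>c > 0\<close> unfolding tendsto_iff dist_norm by simp
  then have ev: "\<forall>\<^sub>F s in at t. norm (Y s - Y t) \<le> 2 * c * norm (Y t) * norm (X s - X t)"
  proof (rule eventually_mono)
    fix s assume s: "norm (X s - X t) < 1 / (2 * c)"
    have b: "norm (Y s - Y t) \<le> norm (Y s) * (norm (X s - X t) * c)"
    proof -
      have "norm (Y s - Y t) = norm (Y s ** (X s - X t) ** Y t)" by (simp add: id)
      also have "\<dots> \<le> norm (Y s ** (X s - X t)) * norm (Y t) * K" by (rule K)
      also have "\<dots> \<le> (norm (Y s) * norm (X s - X t) * K) * norm (Y t) * K"
        using K \<open>K > 0\<close> by (intro mult_right_mono) auto
      also have "\<dots> \<le> norm (Y s) * (norm (X s - X t) * c)"
        by (simp add: c_def algebra_simps mult_nonneg_nonneg)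
      finally show ?thesis .
    qed
    have "norm (Y s) \<le> norm (Y t) + norm (Y s - Y t)"
      by (metis add.commute diff_add_cancel norm_triangle_ineq)
    also have "\<dots> \<le> norm (Y t) + norm (Y s) * (norm (X s - X t) * c)" using b by simp
    also have "\<dots> \<le> norm (Y t) + norm (Y s) * (1/2)"
    proof -
      have "norm (X s - X t) * c \<le> 1/2" using s \<open>c > 0\<close> by (simp add: field_simps)
      then have "norm (Y s) * (norm (X s - X t) * c) \<le> norm (Y s) * (1/2)"
        by (rule mult_left_mono) simp
      then show ?thesis by linarith
    qed
    finally have "norm (Y s) \<le> 2 * norm (Y t)" by simp
    then have "norm (Y s) * (norm (X s - X t) * c) \<le> (2 * norm (Y t)) * (norm (X s - X t) * c)"
      using \<open>c > 0\<close> by (intro mult_right_mono) auto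
    with b show "norm (Y s - Y t) \<le> 2 * c * norm (Y t) * norm (X s - X t)"
      by (simp add: algebra_simps)
  qed
  have "((\<lambda>s. 2 * c * norm (Y t) * norm (X s - X t)) \<longlongrightarrow> 2 * c * norm (Y t) * norm (X t - X t)) (at t)"
    by (intro tendsto_intros Xc)
  then have "((\<lambda>s. 2 * c * norm (Y t) * norm (X s - X t)) \<longlongrightarrow> 0) (at t)" by simp
  then have "((\<lambda>s. Y s - Y t) \<longlongrightarrow> 0) (at t)"
    by (rule Lim_null_comparison[OF ev])
  then have Yc: "(Y \<longlongrightarrow> Y t) (at t)" by (simp add: LIM_zero_iff)
  have q: "((\<lambda>s. (X s - X t) /\<^sub>R (s - t)) \<longlongrightarrow> X') (at t)"
    using dX vd_quot_iff by blast
  have "((\<lambda>s. - (Y s ** ((X s - X t) /\<^sub>R (s - t)) ** Y t)) \<longlongrightarrow> - (Y t ** X' ** Y t)) (at t)"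
    by (intro tendsto_minus bounded_bilinear.tendsto[OF bb_mm] Yc q tendsto_const)
  moreover have "(Y s - Y t) /\<^sub>R (s - t) = - (Y s ** ((X s - X t) /\<^sub>R (s - t)) ** Y t)" for s
    by (simp add: id bounded_bilinear.scaleR_right[OF bb_mm] bounded_bilinear.scaleR_left[OF bb_mm])
  ultimately show ?thesis unfolding Y_def[symmetric] vd_quot_iff by simp
qed

lemma outer_mv: "outer u w *v v = (w \<bullet> v) *\<^sub>R u"
  by (simp add: vec_eq_iff outer_def matrix_vector_mult_def inner_vec_def sum_distrib_left algebra_simps)

lemma E_mv: "(mat 1 - outer u w) *v v = v - (w \<bullet> v) *\<^sub>R u"
  by (simp add: matrix_vector_mult_diff_rdistrib outer_mv)

lemma E_idem_cases:
  assumes u: "u \<noteq> 0" and idem: "(mat 1 - outer u w) ** (mat 1 - outer u w) = mat 1 - outer u w"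
  shows "w = 0 \<or> w \<bullet> u = 1"
proof -
  let ?E = "mat 1 - outer u w"
  have "?E *v (?E *v w) = ?E *v w" using idem by (simp add: matrix_vector_mul_assoc)
  then have "w - (w \<bullet> w) *\<^sub>R u - (w \<bullet> w - (w \<bullet> w) * (w \<bullet> u)) *\<^sub>R u = w - (w \<bullet> w) *\<^sub>R u"
    by (simp add: E_mv inner_diff_right)
  then have "(w \<bullet> w - (w \<bullet> w) * (w \<bullet> u)) *\<^sub>R u = 0"
    by simp
  then have "w \<bullet> w - (w \<bullet> w) * (w \<bullet> u) = 0" using u by simp
  then have "(w \<bullet> w) * (1 - w \<bullet> u) = 0" by (simp add: algebra_simps)
  then show ?thesis by auto
qed

lemma E_range:
  assumes "w \<bullet> u = 1"
  shows "range (\<lambda>v. (mat 1 - outer u w) *v v) = {v. w \<bullet> v = 0}"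
proof
  show "range (\<lambda>v. (mat 1 - outer u w) *v v) \<subseteq> {v. w \<bullet> v = 0}"
    using assms by (auto simp: E_mv inner_diff_right)
  show "{v. w \<bullet> v = 0} \<subseteq> range (\<lambda>v. (mat 1 - outer u w) *v v)"
  proof
    fix v assume "v \<in> {v. w \<bullet> v = 0}"
    then have "(mat 1 - outer u w) *v v = v" by (simp add: E_mv)
    then show "v \<in> range (\<lambda>v. (mat 1 - outer u w) *v v)" by (metis rangeI)
  qed
qed

lemma E_dim:
  fixes w u :: "real^'n"
  assumes "w \<bullet> u = 1"
  shows "dim (range (\<lambda>v. (mat 1 - outer u w) *v v)) = CARD('n) - 1"
proof -
  have "w \<noteq> 0" using assms by auto
  then show ?thesis using E_range[OF assms] dim_hyperplane[of w] by simp
qed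

theorem mainTheorem7:
  fixes f :: "real^'n \<Rightarrow> real^'n"
    and Df :: "real^'n \<Rightarrow> real^'n^'n"
    and T :: real
    and \<gamma> :: "real \<Rightarrow> real^'n"
    and X :: "real \<Rightarrow> real^'n^'n"
    and w :: "real^'n"
  assumes f_smooth: "smooth_map f"
    and Df: "\<And>x. (f has_derivative (\<lambda>h. Df x *v h)) (at x)"
    and T_pos: "T > 0"
    and \<gamma>_periodic: "\<And>t. \<gamma> (t + 1) = \<gamma> t"
    and \<gamma>_sol: "\<And>t. (\<gamma> has_vector_derivative (T *\<^sub>R f (\<gamma> t))) (at t)"
    and nonstat: "f (\<gamma> 0) \<noteq> 0"
    and X_sol: "\<And>t. (X has_vector_derivative (T *\<^sub>R (Df (\<gamma> t) ** X t))) (at t)"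
    and X0: "X 0 = mat 1"
    and Q_proj: "\<And>t. Q_mat X (f (\<gamma> 0)) w t ** Q_mat X (f (\<gamma> 0)) w t = Q_mat X (f (\<gamma> 0)) w t"
    and Q_periodic: "\<And>t. Q_mat X (f (\<gamma> 0)) w (t + 1) = Q_mat X (f (\<gamma> 0)) w t"
    and Q_bij: "\<And>t. bij_betw (\<lambda>v. Gamma_mat X t *v v)
                  (mat_image (Q_mat X (f (\<gamma> 0)) w t)) (mat_image (Q_mat X (f (\<gamma> 0)) w t))"
  shows "(let P = Q_mat X (f (\<gamma> 0)) w in
            smooth_map P \<and>
            (\<forall>t. P t ** P t = P t) \<and>
            (\<forall>t. rank (P t) = CARD('n) - 1) \<and>
            (\<forall>t. P (t + 1) = P t) \<and>
            (\<forall>t. X t ** P 0 = P t ** X t) \<and>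
            (\<forall>t. bij_betw (\<lambda>v. Gamma_mat X t *v v) (mat_image (P t)) (mat_image (P t))))
       \<and> (\<forall>P :: real \<Rightarrow> real^'n^'n.
            smooth_map P \<and>
            (\<forall>t. P t ** P t = P t) \<and>
            (\<forall>t. rank (P t) = CARD('n) - 1) \<and>
            (\<forall>t. P (t + 1) = P t) \<and>
            (\<forall>t. X t ** P 0 = P t ** X t) \<and>
            (\<forall>t. bij_betw (\<lambda>v. Gamma_mat X t *v v) (mat_image (P t)) (mat_image (P t)))
            \<longrightarrow> P = Q_mat X (f (\<gamma> 0)) w)"
proof -
  define u where "u = f (\<gamma> 0)"
  define E where "E = mat 1 - outer u w"
  note Q_proj' = Q_proj[folded u_def] and Q_periodic' = Q_periodic[folded u_def]
    and Q_bij' = Q_bij[folded u_def]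
  have unz: "u \<noteq> 0" using nonstat u_def by simp
  obtain D where D0: "\<And>x. D 0 x [] = f x" and
    DD: "\<And>k vs x. length vs = k \<Longrightarrow> ((\<lambda>y. D k y vs) has_derivative (\<lambda>h. D (Suc k) x (h # vs))) (at x)"
    using f_smooth unfolding smooth_map_def by blast
  have D1: "D (Suc 0) x [h] = Df x *v h" for x h
  proof -
    have "((\<lambda>y. D 0 y []) has_derivative (\<lambda>h. D (Suc 0) x [h])) (at x)" using DD[of "[]" 0 x] by simp
    then have "(f has_derivative (\<lambda>h. D (Suc 0) x [h])) (at x)" using D0 by simp
    from has_derivative_unique[OF this Df[of x]] show ?thesis by metis
  qed
  define L :: "'n \<Rightarrow> real^'n \<Rightarrow> real^'n^'n" where "L j c = (\<chi> i k. if k = j then c $ i else 0)" for j c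
  have Lbl: "bounded_linear (L j)" for j
  proof -
    have "linear (L j)" by (auto simp: linear_iff L_def vec_eq_iff)
    then show ?thesis using linear_conv_bounded_linear by blast
  qed
  have Dfsum: "Df y = (\<Sum>j\<in>UNIV. L j (D (Suc 0) y [axis j 1]))" for y
    by (simp add: vec_eq_iff L_def D1 matrix_vector_mult_basis column_def)
  have DDm: "Ck k g \<Longrightarrow> length vs = m \<Longrightarrow> Ck k (\<lambda>t. D m (g t) vs)" for k g vs m
    by (rule Ck_chain[where D=D, OF DD])
  have Cg: "Ck k \<gamma>" for k
  proof (induction k)
    case 0
    then show ?case using \<gamma>_sol differentiableI_vector by auto
  next
    case (Suc k)
    have "Ck k (\<lambda>t. T *\<^sub>R D 0 (\<gamma> t) [])"
      by (rule Ck_linear[OF bounded_linear_scaleR_right DDm[OF Suc.IH]]) simp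
    then have "Ck k (\<lambda>t. T *\<^sub>R f (\<gamma> t))" using D0 by simp
    then show ?case by (rule Ck_deriv[OF \<gamma>_sol])
  qed
  have CA: "Ck k (\<lambda>t. Df (\<gamma> t))" for k
    unfolding Dfsum
    by (rule Ck_sum) (auto intro!: Ck_linear[OF Lbl] DDm[OF Cg])
  have cA: "continuous_on UNIV (\<lambda>t. T *\<^sub>R Df (\<gamma> t))"
  proof -
    have "isCont (\<lambda>t. Df (\<gamma> t)) t" for t
      using Ck_diff[OF CA[of 0]] differentiable_imp_continuous_within by blast
    then have "continuous_on UNIV (\<lambda>t. Df (\<gamma> t))" by (simp add: continuous_at_imp_continuous_on)
    then show ?thesis by (intro continuous_intros)
  qed
  have invX: "invertible (X t)" for t
  proof -
    have "v = 0" if "X t *v v = 0" for v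
    proof -
      define z where "z = (\<lambda>s. X s *v v)"
      have "(z has_vector_derivative ((T *\<^sub>R Df (\<gamma> s)) *v z s)) (at s)" for s
      proof -
        have "(z has_vector_derivative (X s *v 0 + (T *\<^sub>R (Df (\<gamma> s) ** X s)) *v v)) (at s)"
          unfolding z_def
          by (rule bounded_bilinear.has_vector_derivative[OF bb_mv X_sol has_vector_derivative_const])
        then show ?thesis
          by (simp add: z_def matrix_vector_mul_assoc bounded_bilinear.scaleR_left[OF bb_mm])
      qed
      from gronwall[OF this cA, of t 0] that have "z 0 = 0" by (simp add: z_def)
      then show ?thesis by (simp add: z_def X0)
    qed
    then show ?thesis using matrix_left_invertible_ker invertible_left_inverse by blast
  qed
  define Y where "Y = (\<lambda>t. matrix_inv (X t))"
  have XY: "X t ** Y t = mat 1" "Y t ** X t = mat 1" for t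
    using minv[OF invX[of t]] by (simp_all add: Y_def)
  have dY: "(Y has_vector_derivative ((- T) *\<^sub>R (Y t ** Df (\<gamma> t)))) (at t)" for t
  proof -
    have "(Y has_vector_derivative - (Y t ** (T *\<^sub>R (Df (\<gamma> t) ** X t)) ** Y t)) (at t)"
      unfolding Y_def by (rule inv_deriv[OF X_sol invX])
    moreover have "Y t ** (T *\<^sub>R (Df (\<gamma> t) ** X t)) ** Y t = T *\<^sub>R (Y t ** Df (\<gamma> t) ** (X t ** Y t))"
      by (simp add: bounded_bilinear.scaleR_left[OF bb_mm] bounded_bilinear.scaleR_right[OF bb_mm] matrix_mul_assoc)
    ultimately show ?thesis using XY by simp
  qed
  have CX: "Ck k X" for k
  proof (induction k)
    case 0
    then show ?case using X_sol differentiableI_vector by auto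
  next
    case (Suc k)
    show ?case
      by (rule Ck_deriv[OF X_sol Ck_linear[OF bounded_linear_scaleR_right Ck_bilinear[OF bb_mm CA Suc.IH]]])
  qed
  have CY: "Ck k Y" for k
  proof (induction k)
    case 0
    then show ?case using dY differentiableI_vector by auto
  next
    case (Suc k)
    show ?case
      by (rule Ck_deriv[OF dY Ck_linear[OF bounded_linear_scaleR_right Ck_bilinear[OF bb_mm Suc.IH CA]]])
  qed
  have QX: "Q_mat X u w = (\<lambda>t. X t ** E ** Y t)"
    by (simp add: Q_mat_def Y_def E_def fun_eq_iff)
  have smoothQ: "smooth_map (Q_mat X u w)"
    unfolding QX
    by (rule Cinf_smooth, rule Ck_bilinear[OF bb_mm Ck_bilinear[OF bb_mm CX Ck_const] CY])
  have Xu: "X t *v u = f (\<gamma> t)" for t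
  proof -
    define z where "z = (\<lambda>s. X s *v u - f (\<gamma> s))"
    have "(z has_vector_derivative ((T *\<^sub>R Df (\<gamma> s)) *v z s)) (at s)" for s
    proof -
      have d1: "((\<lambda>s. X s *v u) has_vector_derivative (X s *v 0 + (T *\<^sub>R (Df (\<gamma> s) ** X s)) *v u)) (at s)"
        by (rule bounded_bilinear.has_vector_derivative[OF bb_mv X_sol has_vector_derivative_const])
      have "((f \<circ> \<gamma>) has_derivative ((\<lambda>h. Df (\<gamma> s) *v h) \<circ> (\<lambda>h. h *\<^sub>R (T *\<^sub>R f (\<gamma> s))))) (at s)"
        by (rule diff_chain_at[OF \<gamma>_sol[unfolded has_vector_derivative_def] Df])
      then have d2: "((\<lambda>s. f (\<gamma> s)) has_vector_derivative (T *\<^sub>R Df (\<gamma> s)) *v f (\<gamma> s)) (at s)"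
        by (simp add: has_vector_derivative_def o_def bounded_bilinear.scaleR_right[OF bb_mv]
            bounded_bilinear.scaleR_left[OF bb_mv])
      have "(z has_vector_derivative (X s *v 0 + (T *\<^sub>R (Df (\<gamma> s) ** X s)) *v u) - (T *\<^sub>R Df (\<gamma> s)) *v f (\<gamma> s)) (at s)"
        unfolding z_def by (rule has_vector_derivative_diff[OF d1 d2])
      then show ?thesis
        by (simp add: z_def matrix_vector_mul_assoc bounded_bilinear.scaleR_left[OF bb_mm]
            bounded_bilinear.diff_right[OF bb_mv])
    qed
    from gronwall[OF this cA, of 0 t] have "z t = 0" by (simp add: z_def X0 u_def)
    then show ?thesis by (simp add: z_def)
  qed
  have Xu1: "X 1 *v u = u"
    using Xu[of 1] \<gamma>_periodic[of 0] by (simp add: u_def)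
  have Y0: "Y 0 = mat 1" using XY(1)[of 0] X0 by simp
  have Q0: "Q_mat X u w 0 = E" by (simp add: QX X0 Y0)
  have inv1: "matrix_inv (mat 1 :: real^'n^'n) = mat 1" using Y0 X0 by (simp add: Y_def)
  have G0: "Gamma_mat X 0 = X 1 - mat 1" by (simp add: Gamma_mat_def X0 inv1)
  have EE: "E ** E = E" using Q_proj'[of 0] Q0 by simp
  define M where "M = X 1 - mat 1"
  have Mu: "M *v u = 0" by (simp add: M_def matrix_vector_mult_diff_rdistrib Xu1)
  have wu: "w \<bullet> u = 1"
  proof -
    have "w = 0 \<or> w \<bullet> u = 1" using E_idem_cases[OF unz] EE by (simp add: E_def)
    moreover have "w \<noteq> 0"
    proof
      assume "w = 0"
      then have "E = mat 1" by (simp add: E_def outer_def vec_eq_iff)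
      then have "mat_image (Q_mat X u w 0) = UNIV" using Q0 by (simp add: mat_image_def)
      then have "inj (\<lambda>v. M *v v)" using Q_bij'[of 0] G0 by (simp add: bij_betw_def M_def)
      then have "u = 0" using Mu by (metis matrix_vector_mult_0_right injD)
      then show False using unz by simp
    qed
    ultimately show ?thesis by simp
  qed
  have rangeQ: "range (\<lambda>v. Q_mat X u w t *v v) = (\<lambda>v. X t *v v) ` range (\<lambda>v. E *v v)" for t
  proof
    show "range (\<lambda>v. Q_mat X u w t *v v) \<subseteq> (\<lambda>v. X t *v v) ` range (\<lambda>v. E *v v)"
      by (auto simp: QX matrix_vector_mul_assoc[symmetric])
    show "(\<lambda>v. X t *v v) ` range (\<lambda>v. E *v v) \<subseteq> range (\<lambda>v. Q_mat X u w t *v v)"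
    proof clarify
      fix v
      have "X t *v (E *v v) = Q_mat X u w t *v (X t *v v)"
        by (simp add: QX matrix_vector_mul_assoc matrix_mul_assoc[symmetric] XY)
      then show "X t *v (E *v v) \<in> range (\<lambda>v. Q_mat X u w t *v v)" by (metis rangeI)
    qed
  qed
  have rankE: "dim (range (\<lambda>v. E *v v)) = CARD('n) - 1"
    unfolding E_def by (rule E_dim[OF wu])
  have rankQ: "rank (Q_mat X u w t) = CARD('n) - 1" for t
  proof -
    have "dim ((\<lambda>v. X t *v v) ` range (\<lambda>v. E *v v)) = dim (range (\<lambda>v. E *v v))"
      by (rule dim_image_eq) (auto intro: inj_on_subset[OF inj_matrix_vector_mult[OF invX]])
    then show ?thesis using rankE by (simp add: rank_dim_range rangeQ)
  qed
  have comm: "X t ** Q_mat X u w 0 = Q_mat X u w t ** X t" for t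
    unfolding Q0 by (simp add: QX matrix_mul_assoc[symmetric] XY)
  have mainpart: "(let P = Q_mat X u w in
            smooth_map P \<and>
            (\<forall>t. P t ** P t = P t) \<and>
            (\<forall>t. rank (P t) = CARD('n) - 1) \<and>
            (\<forall>t. P (t + 1) = P t) \<and>
            (\<forall>t. X t ** P 0 = P t ** X t) \<and>
            (\<forall>t. bij_betw (\<lambda>v. Gamma_mat X t *v v) (mat_image (P t)) (mat_image (P t))))"
    unfolding Let_def using smoothQ Q_proj' rankQ Q_periodic' comm Q_bij' by blast
  have uniq: "P = Q_mat X u w" if
      P: "(\<forall>t. P t ** P t = P t) \<and>
            (\<forall>t. rank (P t) = CARD('n) - 1) \<and>
            (\<forall>t. P (t + 1) = P t) \<and>
            (\<forall>t. X t ** P 0 = P t ** X t) \<and>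
            (\<forall>t. bij_betw (\<lambda>v. Gamma_mat X t *v v) (mat_image (P t)) (mat_image (P t)))" for P
  proof -
    define P0 where "P0 = P 0"
    have Pt: "P t = X t ** P0 ** Y t" for t
    proof -
      have "X t ** P0 ** Y t = P t ** (X t ** Y t)" using P by (simp add: P0_def matrix_mul_assoc)
      then show ?thesis by (simp add: XY)
    qed
    have PP: "P0 ** P0 = P0" using P by (simp add: P0_def)
    have rP: "dim (range (\<lambda>v. P0 *v v)) = CARD('n) - 1"
      using P rank_dim_range by (metis P0_def)
    have commP: "M ** P0 = P0 ** M"
    proof -
      have "X 1 ** P0 = P0 ** X 1" using P by (metis P0_def add_0)
      then show ?thesis by (simp add: M_def bounded_bilinear.diff_left[OF bb_mm] bounded_bilinear.diff_right[OF bb_mm])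
    qed
    have bijP: "bij_betw (\<lambda>v. M *v v) (range (\<lambda>v. P0 *v v)) (range (\<lambda>v. P0 *v v))"
      using P G0 by (metis M_def P0_def mat_image_def)
    have bijE: "bij_betw (\<lambda>v. M *v v) (range (\<lambda>v. E *v v)) (range (\<lambda>v. E *v v))"
      using Q_bij'[of 0] G0 Q0 by (simp add: M_def mat_image_def)
    have P0u: "P0 *v u = 0"
    proof -
      have "M *v (P0 *v u) = P0 *v (M *v u)" by (simp add: matrix_vector_mul_assoc commP)
      also have "\<dots> = M *v (P0 *v 0)" by (simp add: Mu)
      finally have eq: "M *v (P0 *v u) = M *v (P0 *v 0)" .
      have inj: "inj_on (\<lambda>v. M *v v) (range (\<lambda>v. P0 *v v))" using bijP bij_betw_def by blast
      have "P0 *v u = P0 *v 0"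
        by (rule inj_onD[OF inj eq rangeI rangeI])
      then show ?thesis by simp
    qed
    have sub1: "range (\<lambda>v. P0 *v v) \<subseteq> range (\<lambda>v. M *v v)"
      using bijP by (auto simp: bij_betw_def)
    have sub2: "range (\<lambda>v. M *v v) \<subseteq> range (\<lambda>v. E *v v)"
    proof clarify
      fix v
      have "v = E *v v + (w \<bullet> v) *\<^sub>R u" by (simp add: E_def E_mv)
      then have "M *v v = M *v (E *v v) + (w \<bullet> v) *\<^sub>R (M *v u)"
        by (metis bounded_bilinear.add_right[OF bb_mv] bounded_bilinear.scaleR_right[OF bb_mv])
      then have "M *v v = M *v (E *v v)" by (simp add: Mu)
      moreover have "M *v (E *v v) \<in> range (\<lambda>v. E *v v)" using bijE by (auto simp: bij_betw_def)
      ultimately show "M *v v \<in> range (\<lambda>v. E *v v)" by simp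
    qed
    have imeq: "range (\<lambda>v. P0 *v v) = range (\<lambda>v. E *v v)"
    proof (rule subspace_dim_equal)
      show "subspace (range (\<lambda>v. P0 *v v))"
        by (rule linear_subspace_image[OF matrix_vector_mul_linear subspace_UNIV])
      show "subspace (range (\<lambda>v. E *v v))"
        by (rule linear_subspace_image[OF matrix_vector_mul_linear subspace_UNIV])
      show "range (\<lambda>v. P0 *v v) \<subseteq> range (\<lambda>v. E *v v)" using sub1 sub2 by blast
      show "dim (range (\<lambda>v. E *v v)) \<le> dim (range (\<lambda>v. P0 *v v))" using rP rankE by simp
    qed
    have "P0 *v v = E *v v" for v
    proof -
      have "E *v v \<in> range (\<lambda>v. P0 *v v)" using imeq by auto
      then obtain y where y: "E *v v = P0 *v y" by auto
      then have fix1: "P0 *v (E *v v) = E *v v" using PP by (simp add: matrix_vector_mul_assoc)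
      have "v = E *v v + (w \<bullet> v) *\<^sub>R u" by (simp add: E_def E_mv)
      then have "P0 *v v = P0 *v (E *v v) + (w \<bullet> v) *\<^sub>R (P0 *v u)"
        by (metis bounded_bilinear.add_right[OF bb_mv] bounded_bilinear.scaleR_right[OF bb_mv])
      then show ?thesis using fix1 P0u by simp
    qed
    then have "P0 = E" by (simp add: matrix_eq)
    then show ?thesis using Pt by (simp add: QX fun_eq_iff)
  qed
  show ?thesis unfolding u_def[symmetric] using mainpart uniq by blast
qed

end
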